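(* Let $L$ be a Lelek fan with top $v$, let $W$ be a wedge in $L$, and let $L'\subseteq L$ be a subcontinuum that is a Lelek fan such that 1. $L'\cap W$ is a Lelek fan, and 2. there is a Cantor fan $C$ with $L'\cap W\subseteq C\subseteq W$. Then there is no retraction from $L$ onto $L'$.
   Context: A continuum is a nonempty compact connected metric space. A dendroid is an arcwise connected, hereditarily unicoherent continuum. A point $x$ of a dendroid $X$ is a ramification point if $x$ is the top (the branch point) of some simple triod in $X$. A fan is a dendroid with at most one ramification point; this point, if it exists, is called the top of the fan. For a fan $X$, a point $x$ is an end point of $X$ if $x$ is an end point of every arc in $X$ containing $x$; $E(X)$ denotes the set of end points of $X$. A fan $X$ with top $v$ is smooth if for every $x\in X$ and every sequence $x_n\to x$ in $X$, the arcs from $v$ to $x_n$ converge (in the Hausdorff metric) to the arc from $v$ to $x$. A Lelek fan is a smooth fan $X$ with $\mathrm{Cl}(E(X))=X$. A Cantor fan is a continuum homeomorphic to $\bigcup_{c\in C}A_c\subseteq\mathbb R^2$, where $C\subseteq[0,1]$ is the Cantor middle-third set and $A_c$ is the straight segment from $(\tfrac12,0)$ to $(c,1)$. If $L$ is a Lelek fan with top $v$, a subcontinuum $W\subseteq L$ is a wedge in $L$ if both $W$ and $(L\setminus W)\cup\{v\}$ are Lelek fans. A retraction from a space $X$ onto a subspace $Y$ is a continuous map $r:X\to Y$ with $r(y)=y$ for all $y\in Y$. *)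

theory Defs
  imports "HOL-Analysis.Analysis"
begin

definition continuum :: "'a::metric_space set \<Rightarrow> bool" where
  "continuum X \<longleftrightarrow> X \<noteq> {} \<and> compact X \<and> connected X"

definition arc_from_to :: "'a::metric_space set \<Rightarrow> 'a \<Rightarrow> 'a \<Rightarrow> bool" where
  "arc_from_to A a b \<longleftrightarrow>
     (\<exists>g. arc g \<and> path_image g = A \<and> pathstart g = a \<and> pathfinish g = b)"

definition is_arc :: "'a::metric_space set \<Rightarrow> bool" where
  "is_arc A \<longleftrightarrow> (\<exists>a b. arc_from_to A a b)"

definition arc_endpoint :: "'a::metric_space set \<Rightarrow> 'a \<Rightarrow> bool" where
  "arc_endpoint A x \<longleftrightarrow> (\<exists>b. arc_from_to A x b)"

definition arcwise_connected :: "'a::metric_space set \<Rightarrow> bool" where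
  "arcwise_connected X \<longleftrightarrow>
     (\<forall>a\<in>X. \<forall>b\<in>X. a \<noteq> b \<longrightarrow> (\<exists>A. A \<subseteq> X \<and> arc_from_to A a b))"

definition hereditarily_unicoherent :: "'a::metric_space set \<Rightarrow> bool" where
  "hereditarily_unicoherent X \<longleftrightarrow>
     (\<forall>A B. A \<subseteq> X \<and> B \<subseteq> X \<and> continuum A \<and> continuum B \<longrightarrow> connected (A \<inter> B))"

definition dendroid :: "'a::metric_space set \<Rightarrow> bool" where
  "dendroid X \<longleftrightarrow> continuum X \<and> arcwise_connected X \<and> hereditarily_unicoherent X"

definition ramification_point :: "'a::metric_space set \<Rightarrow> 'a \<Rightarrow> bool" where
  "ramification_point X x \<longleftrightarrow>
     (\<exists>A1 A2 A3. A1 \<subseteq> X \<and> A2 \<subseteq> X \<and> A3 \<subseteq> X \<and>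
        arc_endpoint A1 x \<and> arc_endpoint A2 x \<and> arc_endpoint A3 x \<and>
        A1 \<inter> A2 = {x} \<and> A1 \<inter> A3 = {x} \<and> A2 \<inter> A3 = {x})"

definition fan_with_top :: "'a::metric_space set \<Rightarrow> 'a \<Rightarrow> bool" where
  "fan_with_top X v \<longleftrightarrow> dendroid X \<and> ramification_point X v \<and>
     (\<forall>x. ramification_point X x \<longrightarrow> x = v)"

definition end_points :: "'a::metric_space set \<Rightarrow> 'a set" where
  "end_points X = {x \<in> X. \<forall>A. A \<subseteq> X \<and> is_arc A \<and> x \<in> A \<longrightarrow> arc_endpoint A x}"

text \<open>The (unique, in a dendroid) arc in X from v to x; degenerate {v} for x = v.\<close>
definition arc_in :: "'a::metric_space set \<Rightarrow> 'a \<Rightarrow> 'a \<Rightarrow> 'a set" where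
  "arc_in X v x = (if x = v then {v} else (THE A. A \<subseteq> X \<and> arc_from_to A v x))"

definition hausdorff_dist :: "'a::metric_space set \<Rightarrow> 'a set \<Rightarrow> real" where
  "hausdorff_dist A B = max (SUP a\<in>A. infdist a B) (SUP b\<in>B. infdist b A)"

definition smooth_fan_with_top :: "'a::metric_space set \<Rightarrow> 'a \<Rightarrow> bool" where
  "smooth_fan_with_top X v \<longleftrightarrow> fan_with_top X v \<and>
     (\<forall>x\<in>X. \<forall>s::nat \<Rightarrow> 'a. (\<forall>n. s n \<in> X) \<and> s \<longlonglongrightarrow> x \<longrightarrow>
        (\<lambda>n. hausdorff_dist (arc_in X v (s n)) (arc_in X v x)) \<longlonglongrightarrow> 0)"

definition lelek_fan_with_top :: "'a::metric_space set \<Rightarrow> 'a \<Rightarrow> bool" where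
  "lelek_fan_with_top X v \<longleftrightarrow> smooth_fan_with_top X v \<and> closure (end_points X) = X"

definition lelek_fan :: "'a::metric_space set \<Rightarrow> bool" where
  "lelek_fan X \<longleftrightarrow> (\<exists>v. lelek_fan_with_top X v)"

definition wedge :: "'a::metric_space set \<Rightarrow> 'a \<Rightarrow> 'a set \<Rightarrow> bool" where
  "wedge L v W \<longleftrightarrow> W \<subseteq> L \<and> continuum W \<and> lelek_fan W \<and> lelek_fan ((L - W) \<union> {v})"

definition cantor_set :: "real set" where
  "cantor_set = {x. \<exists>d::nat \<Rightarrow> nat. (\<forall>n. d n \<in> {0, 2}) \<and>
                      (\<lambda>n. real (d n) / 3 ^ (Suc n)) sums x}"

definition cantor_fan_model :: "(real \<times> real) set" where
  "cantor_fan_model = (\<Union>c\<in>cantor_set. closed_segment (1/2, 0) (c, 1))"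

definition cantor_fan :: "'a::metric_space set \<Rightarrow> bool" where
  "cantor_fan C \<longleftrightarrow> C homeomorphic cantor_fan_model"

end

theory Submission
  imports Defs
begin

lemma cantor_bounds:
  assumes "\<forall>n. d n \<in> {0::nat, 2}" "(\<lambda>n. real (d n) / 3 ^ Suc n) sums x"
  shows "0 \<le> x \<and> x \<le> 1"
proof -
  have g: "(\<lambda>n. 2 / 3 ^ Suc n) sums (1::real)"
  proof -
    have "(\<lambda>n. (1/3::real) ^ n) sums (1 / (1 - 1/3))" by (rule geometric_sums) simp
    then have "(\<lambda>n. (2/3) * (1/3::real) ^ n) sums ((2/3) * (1 / (1 - 1/3)))" by (rule sums_mult)
    moreover have e1: "(\<lambda>n. (2/3) * (1/3::real)^n) = (\<lambda>n. 2/3^Suc n)"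
      by (rule ext) (simp add: power_one_over)
    moreover have e2: "(2/3) * (1/(1-1/3)) = (1::real)" by simp
    ultimately show ?thesis by metis
  qed
  have "0 \<le> x"
  proof (rule sums_le[OF _ sums_zero assms(2)])
    fix n show "0 \<le> real (d n) / 3 ^ Suc n" by simp
  qed
  moreover have "x \<le> 1"
  proof (rule sums_le[OF _ assms(2) g])
    fix n show "real (d n) / 3 ^ Suc n \<le> 2 / 3 ^ Suc n"
    proof -
      have "d n \<in> {0,2}" using assms(1) by blast
      then have "d n \<le> 2" by auto
      then show ?thesis by (intro divide_right_mono) auto
    qed
  qed
  ultimately show ?thesis by simp
qed

lemma cantor_shift:
  assumes "x \<in> cantor_set"
  shows "(x \<le> 1/3 \<and> 3 * x \<in> cantor_set) \<or> (2/3 \<le> x \<and> 3 * x - 2 \<in> cantor_set)"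
proof -
  obtain d where d: "\<forall>n. d n \<in> {0::nat, 2}" "(\<lambda>n. real (d n) / 3 ^ Suc n) sums x"
    using assms unfolding cantor_set_def by auto
  have "(\<lambda>n. real (d (Suc n)) / 3 ^ Suc (Suc n)) sums (x - real (d 0) / 3)"
  proof -
    have "(\<lambda>n. real (d n) / 3 ^ Suc n) sums (x - real (d 0) / 3 + real (d 0) / 3 ^ Suc 0)"
      using d(2) by simp
    then show ?thesis by (rule iffD2[OF sums_Suc_iff])
  qed
  then have "(\<lambda>n. 3 * (real (d (Suc n)) / 3 ^ Suc (Suc n))) sums (3 * (x - real (d 0) / 3))"
    by (rule sums_mult)
  moreover have "(\<lambda>n. 3 * (real (d (Suc n)) / 3 ^ Suc (Suc n))) = (\<lambda>n. real (d (Suc n)) / 3 ^ Suc n)"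
    by (rule ext) (simp add: field_simps)
  moreover have "3 * (x - real (d 0) / 3) = 3 * x - real (d 0)" by simp
  ultimately have s: "(\<lambda>n. real (d (Suc n)) / 3 ^ Suc n) sums (3 * x - real (d 0))"
    by metis
  have d': "\<forall>n. d (Suc n) \<in> {0::nat, 2}" using d(1) by auto
  have y: "3 * x - real (d 0) \<in> cantor_set"
    unfolding cantor_set_def mem_Collect_eq
    by (rule exI[of _ "\<lambda>n. d (Suc n)"]) (use d' s in auto)
  have b: "0 \<le> 3 * x - real (d 0) \<and> 3 * x - real (d 0) \<le> 1"
    by (rule cantor_bounds[OF d' s])
  show ?thesis
  proof (cases "d 0 = 0")
    case True then show ?thesis using y b by auto
  next
    case False
    have "d 0 \<in> {0,2}" using d(1) by blast
    then have "d 0 = 2" using False by auto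
    then show ?thesis using y b by auto
  qed
qed

lemma cantor_sub01: "x \<in> cantor_set \<Longrightarrow> 0 \<le> x \<and> x \<le> 1"
  unfolding cantor_set_def using cantor_bounds by blast

lemma cantor_no_interval_n:
  "a < b \<Longrightarrow> {a..b} \<subseteq> cantor_set \<Longrightarrow> 3 ^ n * (b - a) \<le> (1::real)"
proof (induction n arbitrary: a b)
  case 0
  then have "a \<in> cantor_set" "b \<in> cantor_set" by auto
  then show ?case using cantor_sub01[of a] cantor_sub01[of b] by simp
next
  case (Suc n)
  show ?case
  proof (cases "b \<le> 1/3")
    case True
    have "{3*a..3*b} \<subseteq> cantor_set"
    proof
      fix y assume y: "y \<in> {3*a..3*b}"
      then have "y/3 \<in> {a..b}" by auto
      then have "y/3 \<in> cantor_set" "y/3 \<le> 1/3" using Suc.prems True by auto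
      then show "y \<in> cantor_set" using cantor_shift[of "y/3"] by auto
    qed
    then have "3 ^ n * (3*b - 3*a) \<le> 1" using Suc.IH[of "3*a" "3*b"] Suc.prems by auto
    then show ?thesis by (simp add: algebra_simps)
  next
    case False
    show ?thesis
    proof (cases "2/3 \<le> a")
      case True
      have "{3*a-2..3*b-2} \<subseteq> cantor_set"
      proof
        fix y assume y: "y \<in> {3*a-2..3*b-2}"
        then have "(y+2)/3 \<in> {a..b}" by auto
        then have "(y+2)/3 \<in> cantor_set" "2/3 \<le> (y+2)/3" using Suc.prems True by auto
        moreover have "3 * ((y+2)/3) - 2 = y" by (simp add: field_simps)
        ultimately show "y \<in> cantor_set" using cantor_shift[of "(y+2)/3"] by auto
      qed
      then have "3 ^ n * ((3*b-2) - (3*a-2)) \<le> 1" using Suc.IH[of "3*a-2" "3*b-2"] Suc.prems by auto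
      then show ?thesis by (simp add: algebra_simps)
    next
      case F2: False
      define w where "w = (max a (1/3) + min b (2/3)) / 2"
      have "w \<in> {a..b}" "1/3 < w" "w < 2/3" using False F2 Suc.prems unfolding w_def by auto
      then show ?thesis using cantor_shift[of w] Suc.prems by auto
    qed
  qed
qed

lemma cantor_connected:
  assumes "connected T" "T \<subseteq> cantor_set" "a \<in> T" "b \<in> T"
  shows "a = b"
proof (rule ccontr)
  assume "a \<noteq> b"
  then obtain a' b' where ab: "a' < b'" "a' \<in> T" "b' \<in> T"
    using assms by (metis linorder_neqE_linordered_idom)
  have sub: "{a'..b'} \<subseteq> cantor_set" using connected_contains_Icc[OF assms(1) ab(2,3)] assms(2) by auto
  obtain n where "1 / (b' - a') < 3 ^ n" using real_arch_pow[of 3 "1 / (b' - a')"] by auto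
  then have "1 < 3 ^ n * (b' - a')" using ab(1) by (simp add: field_simps)
  then show False using cantor_no_interval_n[OF ab(1) sub, of n] by simp
qed

definition tau :: "real \<times> real" where "tau = (1/2, 0)"
definition pt :: "real \<Rightarrow> real \<Rightarrow> real \<times> real" where "pt c y = (1/2 + y * (c - 1/2), y)"
definition cdir :: "real \<times> real \<Rightarrow> real" where "cdir a = 1/2 + (fst a - 1/2) / snd a"

lemma snd_pt[simp]: "snd (pt c y) = y" by (simp add: pt_def)
lemma pt_0[simp]: "pt c 0 = tau" by (simp add: pt_def tau_def)
lemma snd_tau[simp]: "snd tau = 0" by (simp add: tau_def)
lemma cdir_pt[simp]: "y \<noteq> 0 \<Longrightarrow> cdir (pt c y) = c" by (simp add: pt_def cdir_def)
lemma pt_eq_tau_iff: "pt c y = tau \<longleftrightarrow> y = 0" by (auto simp: pt_def tau_def)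

lemma model_cases:
  assumes "a \<in> cantor_fan_model"
  obtains c y where "c \<in> cantor_set" "0 \<le> y" "y \<le> 1" "a = pt c y"
proof -
  obtain c where c: "c \<in> cantor_set" "a \<in> closed_segment (1/2, 0) (c, 1)"
    using assms unfolding cantor_fan_model_def by auto
  then obtain u where u: "0 \<le> u" "u \<le> 1" "a = (1 - u) *\<^sub>R (1/2, 0) + u *\<^sub>R (c, 1)"
    unfolding closed_segment_def by auto
  have "a = pt c u" using u(3) by (simp add: pt_def field_simps)
  then show ?thesis using that c u by blast
qed

lemma pt_in_model:
  assumes "c \<in> cantor_set" "0 \<le> y" "y \<le> 1"
  shows "pt c y \<in> cantor_fan_model"
proof -
  have "pt c y = (1 - y) *\<^sub>R (1/2, 0) + y *\<^sub>R (c, 1)" by (simp add: pt_def field_simps)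
  then have "pt c y \<in> closed_segment (1/2, 0) (c, 1)" unfolding closed_segment_def using assms by blast
  then show ?thesis unfolding cantor_fan_model_def using assms by blast
qed

lemma model_snd: "a \<in> cantor_fan_model \<Longrightarrow> 0 \<le> snd a \<and> snd a \<le> 1"
  by (erule model_cases) auto

lemma model_tau: "a \<in> cantor_fan_model \<Longrightarrow> a \<noteq> tau \<Longrightarrow>
   0 < snd a \<and> cdir a \<in> cantor_set \<and> a = pt (cdir a) (snd a)"
  by (erule model_cases) (auto simp: pt_eq_tau_iff)

lemma model_snd0: "a \<in> cantor_fan_model \<Longrightarrow> snd a = 0 \<Longrightarrow> a = tau"
  using model_tau by fastforce

lemma tau_in_model: "tau \<in> cantor_fan_model"
proof -
  have "(0::real) \<in> cantor_set" unfolding cantor_set_def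
    by (rule CollectI, rule exI[of _ "\<lambda>_. 0"]) simp
  then show ?thesis using pt_in_model[of 0 0] by simp
qed

lemma blade_const:
  assumes "connected S" "S \<subseteq> cantor_fan_model" "tau \<notin> S" "a \<in> S" "b \<in> S"
  shows "cdir a = cdir b"
proof -
  have nz: "\<forall>x\<in>S. snd x \<noteq> 0" using assms(2,3) model_snd0 by blast
  have "continuous_on S cdir" unfolding cdir_def
    by (intro continuous_intros) (use nz in auto)
  then have "connected (cdir ` S)" using assms(1) connected_continuous_image by blast
  moreover have "cdir ` S \<subseteq> cantor_set" using assms(2,3) model_tau by blast
  ultimately show ?thesis using cantor_connected assms(4,5) by blast
qed

lemma arc_from_tau:
  assumes "path g" "path_image g \<subseteq> cantor_fan_model" "pathstart g = tau" "pathfinish g = q"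
    "q \<noteq> tau" "inj_on g {0..1}" "0 \<le> y" "y \<le> snd q"
  shows "pt (cdir q) y \<in> path_image g"
proof (cases "y = 0")
  case True then show ?thesis using assms(3) by (auto simp: pathstart_in_path_image[of g, simplified assms(3)])
next
  case False
  have cg: "continuous_on {0..1} g" using assms(1) unfolding path_def .
  have "continuous_on {0..1} (\<lambda>s. snd (g s))" by (intro continuous_intros cg)
  moreover have "snd (g 0) \<le> y" "y \<le> snd (g 1)" using assms(3,4,7,8) by (auto simp: pathstart_def pathfinish_def)
  ultimately obtain s where s: "0 \<le> s" "s \<le> 1" "snd (g s) = y"
    using IVT'[of "\<lambda>s. snd (g s)" 0 y 1] by auto
  have "s \<noteq> 0" using s(3) False assms(3) by (auto simp: pathstart_def)
  define S where "S = g ` {s..1}"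
  have "connected S" unfolding S_def
    by (rule connected_continuous_image[OF continuous_on_subset[OF cg]]) (use s in auto)
  moreover have "S \<subseteq> cantor_fan_model" using assms(2) s unfolding S_def path_image_def by auto
  moreover have "tau \<notin> S"
  proof
    assume "tau \<in> S"
    then obtain t where t: "t \<in> {s..1}" "g t = tau" unfolding S_def by auto
    then have "g t = g 0" using assms(3) by (simp add: pathstart_def)
    then have "t = 0" using assms(6) t(1) s by (auto dest: inj_onD)
    then show False using t(1) s \<open>s \<noteq> 0\<close> by auto
  qed
  moreover have "g s \<in> S" "q \<in> S" using s assms(4) unfolding S_def pathfinish_def by auto
  ultimately have "cdir (g s) = cdir q" by (rule blade_const)
  moreover have "g s \<noteq> tau" using \<open>tau \<notin> S\<close> \<open>g s \<in> S\<close> by auto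
  moreover have "g s \<in> cantor_fan_model" using assms(2) s unfolding path_image_def by auto
  ultimately have "g s = pt (cdir q) y" using model_tau[of "g s"] s(3) by auto
  then show ?thesis using s unfolding path_image_def by force
qed

lemma segment_eq:
  assumes "0 < h"
  shows "closed_segment tau (pt c h) = pt c ` {0..h}"
proof
  show "closed_segment tau (pt c h) \<subseteq> pt c ` {0..h}"
  proof
    fix a assume "a \<in> closed_segment tau (pt c h)"
    then obtain u where u: "0 \<le> u" "u \<le> 1" "a = (1 - u) *\<^sub>R tau + u *\<^sub>R pt c h"
      unfolding closed_segment_def by auto
    have "a = pt c (u * h)" using u(3) by (simp add: pt_def tau_def field_simps)
    moreover have "u * h \<in> {0..h}" using u assms by (auto simp: mult_le_cancel_right1)
    ultimately show "a \<in> pt c ` {0..h}" by blast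
  qed
next
  show "pt c ` {0..h} \<subseteq> closed_segment tau (pt c h)"
  proof
    fix a assume "a \<in> pt c ` {0..h}"
    then obtain y where y: "0 \<le> y" "y \<le> h" "a = pt c y" by auto
    have "a = (1 - y/h) *\<^sub>R tau + (y/h) *\<^sub>R pt c h"
      using y assms by (simp add: pt_def tau_def field_simps)
    moreover have "0 \<le> y/h" "y/h \<le> 1" using y assms by auto
    ultimately show "a \<in> closed_segment tau (pt c h)" unfolding closed_segment_def by blast
  qed
qed

lemma segment_start:
  assumes "0 < y0" "y0 < h" "path g" "inj_on g {0..1}"
    "path_image g = pt c ` {0..h}" "pathstart g = pt c y0"
  shows False
proof -
  have cg: "continuous_on {0..1} g" using assms(3) unfolding path_def .
  define S where "S = g ` {0<..1}"
  have "connected S" unfolding S_def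
    by (rule connected_continuous_image) (auto intro: continuous_on_subset[OF cg])
  have inS: "a \<in> S" if a1: "a \<in> path_image g" and a2: "snd a \<noteq> y0" for a
  proof -
    obtain t where t: "t \<in> {0..1}" "a = g t" using a1 unfolding path_image_def by blast
    have "t \<noteq> 0" using t a2 assms(6) by (auto simp: pathstart_def)
    then show ?thesis using t unfolding S_def by auto
  qed
  have "pt c 0 \<in> pt c ` {0..h}" using assms(1,2) by (intro imageI) auto
  then have "pt c 0 \<in> S" using inS[of "pt c 0"] assms(1,2,5) by simp
  moreover have "pt c h \<in> pt c ` {0..h}" using assms(1,2) by (intro imageI) auto
  then have "pt c h \<in> S" using inS[of "pt c h"] assms(1,2,5) by simp
  ultimately obtain a where a: "a \<in> S" "snd a = y0"
    using connected_ivt_component[OF \<open>connected S\<close>, of "pt c 0" "pt c h" "(0,1)" y0] assms(1,2)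
    by (auto simp: inner_prod_def)
  then obtain t where t: "t \<in> {0<..1}" "a = g t" unfolding S_def by auto
  have "a \<in> path_image g" using t unfolding path_image_def by auto
  then have "a = pt c y0" using a(2) assms(5) by auto
  then have "g t = g 0" using t assms(6) by (simp add: pathstart_def)
  then have "t = 0" using assms(4) t(1) by (auto dest: inj_onD)
  then show False using t(1) by simp
qed

lemma tendsto_cdir:
  assumes "(e \<longlongrightarrow> z) F" "snd z \<noteq> 0"
  shows "((\<lambda>n. cdir (e n)) \<longlongrightarrow> cdir z) F"
  unfolding cdir_def using assms by (intro tendsto_intros) auto

lemma tendsto_pt:
  assumes "(a \<longlongrightarrow> c) F" "(b \<longlongrightarrow> y) F"
  shows "((\<lambda>n. pt (a n) (b n)) \<longlongrightarrow> pt c y) F"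
  unfolding pt_def using assms by (intro tendsto_intros)

lemma main_model:
  fixes K E :: "(real \<times> real) set" and \<rho> :: "real \<times> real \<Rightarrow> real \<times> real"
  assumes ret: "retraction cantor_fan_model K \<rho>"
    and tauK: "tau \<in> K"
    and p: "p \<in> K" "p \<noteq> tau"
    and segs: "\<And>q y. q \<in> K \<Longrightarrow> q \<noteq> tau \<Longrightarrow> 0 \<le> y \<Longrightarrow> y \<le> snd q \<Longrightarrow> pt (cdir q) y \<in> K"
    and dense: "K \<subseteq> closure E" and EK: "E \<subseteq> K"
    and maxE: "\<And>e q. e \<in> E \<Longrightarrow> e \<noteq> tau \<Longrightarrow> q \<in> K \<Longrightarrow> q \<noteq> tau \<Longrightarrow> cdir q = cdir e \<Longrightarrow> snd q \<le> snd e"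
  shows False
proof -
  let ?M = cantor_fan_model
  have KM: "K \<subseteq> ?M" and contr: "continuous_on ?M \<rho>" and rM: "\<And>x. x \<in> ?M \<Longrightarrow> \<rho> x \<in> K"
    and fixK: "\<And>x. x \<in> K \<Longrightarrow> \<rho> x = x"
    using ret unfolding retraction_def by auto
  define H where "H = snd p"
  define c where "c = cdir p"
  have pM: "p \<in> ?M" using p KM by auto
  have H: "0 < H" "H \<le> 1" using model_tau[OF pM p(2)] model_snd[OF pM] unfolding H_def by auto
  have cC: "c \<in> cantor_set" using model_tau[OF pM p(2)] unfolding c_def by auto
  have segK: "\<And>y. 0 \<le> y \<Longrightarrow> y \<le> H \<Longrightarrow> pt c y \<in> K" using segs[OF p] unfolding H_def c_def by auto
  define z where "z = pt c (H/2)"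
  have "z \<in> K" unfolding z_def using segK H by auto
  then have "z \<in> closure E" using dense by auto
  then obtain e where eE: "\<And>n. e n \<in> E" and ez: "e \<longlonglongrightarrow> z"
    unfolding closure_sequential by blast
  have eK: "\<And>n. e n \<in> K" using eE EK by auto
  have snde: "(\<lambda>n. snd (e n)) \<longlonglongrightarrow> H/2" using tendsto_snd[OF ez] unfolding z_def by simp
  have cdire: "(\<lambda>n. cdir (e n)) \<longlonglongrightarrow> c" using tendsto_cdir[OF ez] H unfolding z_def by simp
  define t where "t = 3 * H / 4"
  define w where "w n = pt (cdir (e n)) t" for n
  have ev1: "\<forall>\<^sub>F n in sequentially. H/4 < snd (e n)" using order_tendstoD(1)[OF snde, of "H/4"] H by simp
  have ev2: "\<forall>\<^sub>F n in sequentially. snd (e n) < 5*H/8" using order_tendstoD(2)[OF snde, of "5*H/8"] H by simp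
  have wlim: "w \<longlonglongrightarrow> pt c t" unfolding w_def by (intro tendsto_pt cdire tendsto_const)
  have ptcM: "pt c t \<in> ?M" using segK[of t] H KM unfolding t_def by auto
  have ev3: "\<forall>\<^sub>F n in sequentially. w n \<in> ?M"
    using ev1
  proof eventually_elim
    case (elim n)
    have "e n \<noteq> tau" using elim H by auto
    then have "cdir (e n) \<in> cantor_set" using model_tau[of "e n"] eK KM by auto
    then show ?case unfolding w_def using H by (intro pt_in_model) (auto simp: t_def)
  qed
  have "(\<lambda>n. \<rho> (w n)) \<longlonglongrightarrow> \<rho> (pt c t)"
    using continuous_on_tendsto_compose[OF contr wlim ptcM ev3] by (simp add: o_def)
  then have rwlim: "(\<lambda>n. \<rho> (w n)) \<longlonglongrightarrow> pt c t" using fixK segK[of t] H unfolding t_def by auto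
  have ev4: "\<forall>\<^sub>F n in sequentially. 5*H/8 < snd (\<rho> (w n))"
    using order_tendstoD(1)[OF tendsto_snd[OF rwlim], of "5*H/8"] H unfolding t_def by simp
  have "\<forall>\<^sub>F n in sequentially. \<exists>y. H/4 \<le> y \<and> y \<le> t \<and> \<rho> (pt (cdir (e n)) y) = tau"
    using ev1 ev2 ev3 ev4
  proof eventually_elim
    case (elim n)
    have en: "e n \<noteq> tau" using elim H by auto
    have cn: "cdir (e n) \<in> cantor_set" using model_tau[of "e n"] en eK KM by auto
    have een: "e n = pt (cdir (e n)) (snd (e n))" using model_tau[of "e n"] en eK KM by auto
    define S where "S = pt (cdir (e n)) ` {snd (e n)..t}"
    have SM: "S \<subseteq> ?M" unfolding S_def using cn H elim(1)
      by (auto intro!: pt_in_model simp: t_def)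
    have "connected S" unfolding S_def
      by (rule connected_continuous_image) (auto simp: pt_def intro!: continuous_intros)
    then have conT: "connected (\<rho> ` S)"
      by (rule connected_continuous_image[OF continuous_on_subset[OF contr SM]])
    have "e n \<in> S" unfolding S_def using elim H by (subst een) (auto simp: t_def)
    then have e1: "e n \<in> \<rho> ` S" using fixK[OF eK[of n]] by force
    have "w n \<in> S" unfolding S_def w_def using elim H by (auto simp: t_def)
    then have e2: "\<rho> (w n) \<in> \<rho> ` S" by auto
    show ?case
    proof (rule ccontr)
      assume nex: "\<not> ?case"
      have "tau \<notin> \<rho> ` S"
      proof
        assume "tau \<in> \<rho> ` S"
        then obtain y where "y \<in> {snd (e n)..t}" "\<rho> (pt (cdir (e n)) y) = tau"
          unfolding S_def by auto
        then show False using nex elim by auto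
      qed
      moreover have "\<rho> ` S \<subseteq> ?M" using rM SM KM by blast
      ultimately have "cdir (\<rho> (w n)) = cdir (e n)"
        using blade_const[OF conT _ _ e2 e1] by auto
      moreover have "\<rho> (w n) \<in> K" using rM SM \<open>w n \<in> S\<close> by blast
      moreover have "\<rho> (w n) \<noteq> tau" using \<open>tau \<notin> \<rho> ` S\<close> e2 by auto
      ultimately have "snd (\<rho> (w n)) \<le> snd (e n)" using maxE[OF eE en] by auto
      then show False using elim by auto
    qed
  qed
  then obtain N where N: "\<And>n. n \<ge> N \<Longrightarrow> \<exists>y. H/4 \<le> y \<and> y \<le> t \<and> \<rho> (pt (cdir (e n)) y) = tau"
    unfolding eventually_sequentially by blast
  have ev3': "\<forall>\<^sub>F n in sequentially. cdir (e n) \<in> cantor_set"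
    using ev1
  proof eventually_elim
    case (elim n)
    have "e n \<noteq> tau" using elim H by auto
    then show ?case using model_tau[of "e n"] eK KM by auto
  qed
  then obtain N2 where N2: "\<And>n. n \<ge> N2 \<Longrightarrow> cdir (e n) \<in> cantor_set"
    unfolding eventually_sequentially by blast
  define N' where "N' = max N N2"
  define yy where "yy n = (SOME y. H/4 \<le> y \<and> y \<le> t \<and> \<rho> (pt (cdir (e (n + N'))) y) = tau)" for n
  have yy: "H/4 \<le> yy n \<and> yy n \<le> t \<and> \<rho> (pt (cdir (e (n + N'))) (yy n)) = tau" for n
    unfolding yy_def by (rule someI_ex) (rule N, simp add: N'_def)
  have "seq_compact {H/4..t}" by (rule compact_imp_seq_compact) simp
  then obtain l r where l: "l \<in> {H/4..t}" and r: "strict_mono r" and lim: "(yy \<circ> r) \<longlonglongrightarrow> l"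
    using seq_compactE[of "{H/4..t}" yy] yy by auto
  have cl: "(\<lambda>n. cdir (e (r n + N'))) \<longlonglongrightarrow> c"
  proof -
    have "(\<lambda>n. cdir (e (n + N'))) \<longlonglongrightarrow> c" using LIMSEQ_ignore_initial_segment[OF cdire] .
    from LIMSEQ_subseq_LIMSEQ[OF this r] show ?thesis by (simp add: o_def)
  qed
  have plim: "(\<lambda>n. pt (cdir (e (r n + N'))) (yy (r n))) \<longlonglongrightarrow> pt c l"
    using tendsto_pt[OF cl lim[unfolded o_def]] .
  have inM: "\<forall>\<^sub>F n in sequentially. pt (cdir (e (r n + N'))) (yy (r n)) \<in> ?M"
  proof (intro always_eventually allI pt_in_model)
    fix n
    show "cdir (e (r n + N')) \<in> cantor_set" using N2 unfolding N'_def by simp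
    show "0 \<le> yy (r n)" "yy (r n) \<le> 1" using yy[of "r n"] H unfolding t_def by auto
  qed
  have plM: "pt c l \<in> ?M" using cC l H by (intro pt_in_model) (auto simp: t_def)
  have "(\<lambda>n. \<rho> (pt (cdir (e (r n + N'))) (yy (r n)))) \<longlonglongrightarrow> \<rho> (pt c l)"
    using continuous_on_tendsto_compose[OF contr plim plM inM] by (simp add: o_def)
  moreover have "(\<lambda>n. \<rho> (pt (cdir (e (r n + N'))) (yy (r n)))) = (\<lambda>n. tau)" using yy by auto
  ultimately have "\<rho> (pt c l) = tau" using LIMSEQ_unique tendsto_const by metis
  moreover have "pt c l \<in> K" using segK l H by (auto simp: t_def)
  ultimately have "pt c l = tau" using fixK by auto
  then show False using l H by (simp add: pt_eq_tau_iff)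
qed

lemma arc_compose_inj:
  assumes "arc g" "path_image g \<subseteq> S" "continuous_on S f" "inj_on f S"
  shows "arc (f \<circ> g)"
proof -
  have "path (f \<circ> g)"
    using assms by (intro path_continuous_image) (auto simp: arc_imp_path intro: continuous_on_subset)
  moreover have "inj_on (f \<circ> g) {0..1}"
  proof (rule comp_inj_on)
    show "inj_on g {0..1}" using assms(1) by (rule arc_imp_inj_on)
    show "inj_on f (g ` {0..1})" by (rule inj_on_subset[OF assms(4)]) (use assms(2) in \<open>auto simp: path_image_def\<close>)
  qed
  ultimately show ?thesis unfolding arc_def by simp
qed

lemma two_branches:
  assumes "connected A" "connected B" "A \<subseteq> cantor_fan_model" "B \<subseteq> cantor_fan_model"
    "tau \<notin> A" "tau \<notin> B" "x0 \<in> A" "x0 \<in> B" "a \<in> A" "b \<in> B"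
    "(snd a - snd x0) * (snd b - snd x0) > 0"
  shows "\<exists>q \<in> A \<inter> B. q \<noteq> x0"
proof -
  have U: "connected (A \<union> B)" using assms(1,2,7,8) connected_Un by blast
  have cd: "\<And>u w. u \<in> A \<union> B \<Longrightarrow> w \<in> A \<union> B \<Longrightarrow> cdir u = cdir w"
    using blade_const[OF U] assms(3-6) by blast
  have rep: "\<And>u. u \<in> A \<union> B \<Longrightarrow> u = pt (cdir x0) (snd u)"
    using model_tau assms(3-8) cd by (metis Un_iff subsetD)
  have ivt: "\<exists>u\<in>S. snd u = y" if "connected S" "u1 \<in> S" "u2 \<in> S" "snd u1 \<le> y" "y \<le> snd u2" for S :: "(real \<times> real) set" and u1 u2 y
    using connected_ivt_component[OF that(1-3), of "(0,1)" y] that(4,5) by (auto simp: inner_prod_def)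
  show ?thesis
  proof (cases "snd a > snd x0")
    case True
    then have "snd b > snd x0" using assms(11) by (smt (verit) mult_le_0_iff)
    define y where "y = min (snd a) (snd b)"
    obtain u where u: "u \<in> A" "snd u = y" using ivt[OF assms(1,7,9), of y] True \<open>snd b > snd x0\<close> unfolding y_def by auto
    obtain w where w: "w \<in> B" "snd w = y" using ivt[OF assms(2,8,10), of y] True \<open>snd b > snd x0\<close> unfolding y_def by auto
    have "u = w" using rep[of u] rep[of w] u w by auto
    moreover have "u \<noteq> x0" using u True \<open>snd b > snd x0\<close> unfolding y_def by auto
    ultimately show ?thesis using u w by auto
  next
    case False
    then have a: "snd a < snd x0" using assms(11) by (cases "snd a = snd x0") auto
    then have "snd b < snd x0" using assms(11) by (smt (verit) mult_le_0_iff)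
    define y where "y = max (snd a) (snd b)"
    obtain u where u: "u \<in> A" "snd u = y" using ivt[OF assms(1,9,7), of y] a \<open>snd b < snd x0\<close> unfolding y_def by auto
    obtain w where w: "w \<in> B" "snd w = y" using ivt[OF assms(2,10,8), of y] a \<open>snd b < snd x0\<close> unfolding y_def by auto
    have "u = w" using rep[of u] rep[of w] u w by auto
    moreover have "u \<noteq> x0" using u a \<open>snd b < snd x0\<close> unfolding y_def by auto
    ultimately show ?thesis using u w by auto
  qed
qed

lemma transfer_main:
  fixes K C :: "'a::metric_space set"
  assumes lel: "lelek_fan K" and KC: "K \<subseteq> C"
    and hom: "homeomorphism C cantor_fan_model h k" and ret: "retraction C K \<rho>"
  shows False
proof -
  let ?M = cantor_fan_model
  have kh: "\<And>x. x \<in> C \<Longrightarrow> k (h x) = x" and hC: "h ` C = ?M" and ch: "continuous_on C h"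
    and hk: "\<And>y. y \<in> ?M \<Longrightarrow> h (k y) = y" and kM: "k ` ?M = C" and ck: "continuous_on ?M k"
    using hom unfolding homeomorphism_def by auto
  have injh: "inj_on h C" using kh by (metis inj_on_inverseI)
  have injk: "inj_on k ?M" using hk by (metis inj_on_inverseI)
  have cr: "continuous_on C \<rho>" and rC: "\<And>x. x \<in> C \<Longrightarrow> \<rho> x \<in> K" and rfix: "\<And>x. x \<in> K \<Longrightarrow> \<rho> x = x"
    using ret unfolding retraction_def by auto
  obtain v0 where lt: "lelek_fan_with_top K v0" using lel unfolding lelek_fan_def by blast
  then have dK: "dendroid K" and ram: "ramification_point K v0" and clE: "closure (end_points K) = K"
    unfolding lelek_fan_with_top_def smooth_fan_with_top_def fan_with_top_def by auto
  then have conK: "connected K" and acK: "arcwise_connected K"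
    unfolding dendroid_def continuum_def by auto
  define K' where "K' = h ` K"
  have K'M: "K' \<subseteq> ?M" unfolding K'_def using hC KC by auto
  have kK: "k u \<in> K" if uK: "u \<in> K'" for u
  proof -
    obtain x where "x \<in> K" "u = h x" using uK unfolding K'_def by auto
    then show ?thesis using kh KC by auto
  qed
  define \<rho>' where "\<rho>' = h \<circ> \<rho> \<circ> k"
  have ret': "retraction ?M K' \<rho>'"
    unfolding retraction_def
  proof (intro conjI)
    show "K' \<subseteq> ?M" by (rule K'M)
    show "continuous_on ?M \<rho>'" unfolding \<rho>'_def
    proof (intro continuous_on_compose)
      show "continuous_on ?M k" by (rule ck)
      show "continuous_on (k ` ?M) \<rho>" using cr kM by simp
      show "continuous_on (\<rho> ` k ` ?M) h" using continuous_on_subset[OF ch] rC kM KC by blast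
    qed
    show "\<rho>' \<in> ?M \<rightarrow> K'" unfolding \<rho>'_def K'_def using rC kM by auto
    show "\<forall>x\<in>K'. \<rho>' x = x" unfolding \<rho>'_def K'_def using rfix kh KC by auto
  qed
  obtain A1 A2 A3 where A: "A1 \<subseteq> K" "A2 \<subseteq> K" "A3 \<subseteq> K"
    "arc_endpoint A1 v0" "arc_endpoint A2 v0" "arc_endpoint A3 v0"
    "A1 \<inter> A2 = {v0}" "A1 \<inter> A3 = {v0}" "A2 \<inter> A3 = {v0}"
    using ram unfolding ramification_point_def by blast
  have v0K: "v0 \<in> K" using A(1,7) by auto
  have branch: "\<exists>b. b \<in> A \<and> b \<noteq> v0 \<and> connected (h ` A) \<and> h ` A \<subseteq> K'"
    if tA: "A \<subseteq> K" "arc_endpoint A v0" for A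
  proof -
    obtain b g where g: "arc g" "path_image g = A" "pathstart g = v0" "pathfinish g = b"
      using tA(2) unfolding arc_endpoint_def arc_from_to_def by blast
    have "b \<noteq> v0" using arc_distinct_ends[OF g(1)] g by auto
    moreover have "b \<in> A" using g pathfinish_in_path_image by blast
    moreover have "connected (h ` A)"
      using connected_continuous_image[OF continuous_on_subset[OF ch] connected_path_image[OF arc_imp_path[OF g(1)]]]
        g(2) tA(1) KC by auto
    moreover have "h ` A \<subseteq> K'" unfolding K'_def using tA(1) by auto
    ultimately show ?thesis by blast
  qed
  have tauK: "tau \<in> K'"
  proof (rule ccontr)
    assume nt: "tau \<notin> K'"
    have pair: False if pa: "A \<subseteq> K" "arc_endpoint A v0" "B \<subseteq> K" "arc_endpoint B v0" "A \<inter> B = {v0}"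
      "a \<in> A" "b \<in> B" "(snd (h a) - snd (h v0)) * (snd (h b) - snd (h v0)) > 0" for A B a b
    proof -
      obtain qa qb where "qa \<in> A" "qb \<in> B" "h qa = h qb" "h qa \<noteq> h v0"
      proof -
        have "\<exists>q \<in> h ` A \<inter> h ` B. q \<noteq> h v0"
          using two_branches[of "h ` A" "h ` B" "h v0" "h a" "h b"] branch[OF pa(1,2)] branch[OF pa(3,4)]
            K'M nt pa(5-8) by blast
        then show ?thesis using that by blast
      qed
      moreover have "qa = qb" using injh \<open>h qa = h qb\<close> \<open>qa \<in> A\<close> \<open>qb \<in> B\<close> pa(1,3) KC
        by (meson inj_onD subsetD)
      ultimately show False using pa(5) by auto
    qed
    obtain b1 where b1: "b1 \<in> A1" "b1 \<noteq> v0" using branch[OF A(1,4)] by blast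
    obtain b2 where b2: "b2 \<in> A2" "b2 \<noteq> v0" using branch[OF A(2,5)] by blast
    obtain b3 where b3: "b3 \<in> A3" "b3 \<noteq> v0" using branch[OF A(3,6)] by blast
    have hne: "\<And>b. b \<in> K \<Longrightarrow> b \<noteq> v0 \<Longrightarrow> snd (h b) \<noteq> snd (h v0)"
    proof
      fix b assume b: "b \<in> K" "b \<noteq> v0" "snd (h b) = snd (h v0)"
      have "cdir (h b) = cdir (h v0)"
        using blade_const[of K' "h b" "h v0"] conK K'M nt b v0K
          connected_continuous_image[OF continuous_on_subset[OF ch KC] conK] unfolding K'_def by auto
      moreover have hb: "h b \<in> K'" "h v0 \<in> K'" unfolding K'_def using b v0K by auto
      moreover have "h b \<in> ?M" "h v0 \<in> ?M" using hb K'M by auto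
      moreover have "h b \<noteq> tau" "h v0 \<noteq> tau" using hb nt by metis+
      ultimately have "h b = h v0" using model_tau[of "h b"] model_tau[of "h v0"] b(3) by metis
      then show False using injh b v0K KC by (meson inj_onD subsetD)
    qed
    define d1 where "d1 = snd (h b1) - snd (h v0)"
    define d2 where "d2 = snd (h b2) - snd (h v0)"
    define d3 where "d3 = snd (h b3) - snd (h v0)"
    have "d1 \<noteq> 0" "d2 \<noteq> 0" "d3 \<noteq> 0" unfolding d1_def d2_def d3_def
      using hne b1 b2 b3 A(1-3) by auto
    then have "d1 * d2 > 0 \<or> d1 * d3 > 0 \<or> d2 * d3 > 0"
      by (smt (verit) mult_neg_neg mult_pos_pos)
    then show False
      using pair[OF A(1,4,2,5,7) b1(1) b2(1)] pair[OF A(1,4,3,6,8) b1(1) b3(1)] pair[OF A(2,5,3,6,9) b2(1) b3(1)]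
      unfolding d1_def d2_def d3_def by auto
  qed
  obtain p where p: "p \<in> K'" "p \<noteq> tau"
  proof -
    obtain b1 where b1: "b1 \<in> A1" "b1 \<noteq> v0" using branch[OF A(1,4)] by blast
    have "h b1 \<noteq> h v0" using injh b1 v0K A(1) KC by (meson inj_onD subsetD)
    moreover have "h b1 \<in> K'" "h v0 \<in> K'" unfolding K'_def using b1 A(1) v0K by auto
    ultimately show ?thesis using that by metis
  qed
  have segs: "pt (cdir q) y \<in> K'" if q: "q \<in> K'" "q \<noteq> tau" "0 \<le> y" "y \<le> snd q" for q y
  proof -
    have ktK: "k tau \<in> K" using kK tauK by blast
    have kqK: "k q \<in> K" using kK q(1) by blast
    have "k tau \<noteq> k q"
    proof
      assume "k tau = k q"
      then have "h (k tau) = h (k q)" by simp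
      moreover have "tau \<in> ?M" "q \<in> ?M" using tauK q(1) K'M by auto
      ultimately show False using hk q(2) by metis
    qed
    then obtain A where A: "A \<subseteq> K" "arc_from_to A (k tau) (k q)"
      using acK ktK kqK unfolding arcwise_connected_def by blast
    then obtain g where g: "arc g" "path_image g = A" "pathstart g = k tau" "pathfinish g = k q"
      unfolding arc_from_to_def by blast
    have ag: "arc (h \<circ> g)" using arc_compose_inj[OF g(1) _ ch injh] g(2) A(1) KC by auto
    have "pt (cdir q) y \<in> path_image (h \<circ> g)"
    proof (rule arc_from_tau)
      show "path (h \<circ> g)" using ag by (rule arc_imp_path)
      show "path_image (h \<circ> g) \<subseteq> ?M" using g(2) A(1) K'M unfolding path_image_compose K'_def by auto
      show "pathstart (h \<circ> g) = tau" using g(3) hk[of tau] tauK K'M by (auto simp: pathstart_compose)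
      show "pathfinish (h \<circ> g) = q" using g(4) hk[of q] q(1) K'M by (auto simp: pathfinish_compose)
      show "inj_on (h \<circ> g) {0..1}" by (rule arc_imp_inj_on[OF ag])
    qed (use q in auto)
    then show ?thesis using g(2) A(1) unfolding path_image_compose K'_def by auto
  qed
  define E where "E = h ` end_points K"
  have EK: "E \<subseteq> K'" unfolding E_def K'_def end_points_def by auto
  have dense: "K' \<subseteq> closure E"
  proof -
    have "h ` closure (end_points K) \<subseteq> closure E"
      unfolding E_def
    proof (rule image_closure_subset)
      show "continuous_on (closure (end_points K)) h" using clE continuous_on_subset[OF ch KC] by simp
    qed (simp_all add: closure_subset)
    then show ?thesis using clE unfolding K'_def by simp
  qed
  have maxE: "snd q \<le> snd e" if e: "e \<in> E" "e \<noteq> tau" and q: "q \<in> K'" "q \<noteq> tau" "cdir q = cdir e" for e q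
  proof (rule ccontr)
    assume "\<not> snd q \<le> snd e"
    then have lt: "snd e < snd q" by simp
    obtain x where x: "x \<in> end_points K" "e = h x" using e(1) unfolding E_def by auto
    have xK: "x \<in> K" using x(1) unfolding end_points_def by auto
    have eM: "e \<in> ?M" using x xK K'M unfolding K'_def by auto
    have qM: "q \<in> ?M" using q K'M by auto
    define c where "c = cdir q"
    have q': "0 < snd q" "q = pt c (snd q)" using model_tau[OF qM q(2)] unfolding c_def by auto
    have e': "0 < snd e" "e = pt c (snd e)" using model_tau[OF eM e(2)] q(3) unfolding c_def by auto
    define Sg where "Sg = pt c ` {0..snd q}"
    have Sg_eq: "closed_segment tau q = Sg" unfolding Sg_def using segment_eq[OF q'(1), of c] q'(2) by simp
    have SgK: "Sg \<subseteq> K'" unfolding Sg_def using segs[OF q(1,2)] c_def by auto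
    define A where "A = k ` Sg"
    have AK: "A \<subseteq> K" unfolding A_def using SgK kK by auto
    have al: "arc (k \<circ> linepath tau q)"
      using arc_compose_inj[OF arc_linepath[OF q(2)[symmetric]] _ ck injk] Sg_eq SgK K'M by auto
    have "arc_from_to A (k tau) (k q)" unfolding arc_from_to_def A_def
      by (rule exI[of _ "k \<circ> linepath tau q"])
        (simp add: al path_image_compose pathstart_compose pathfinish_compose flip: Sg_eq)
    then have "is_arc A" unfolding is_arc_def by blast
    moreover have "x \<in> A"
    proof -
      have "e \<in> Sg" unfolding Sg_def using e' lt by (intro image_eqI[of _ _ "snd e"]) auto
      then have "k e \<in> A" unfolding A_def by simp
      moreover have "k e = x" using kh[OF subsetD[OF KC xK]] x(2) by simp
      ultimately show ?thesis by simp
    qed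
    ultimately have "arc_endpoint A x" using x(1) AK unfolding end_points_def by blast
    then obtain \<gamma> b where \<gamma>: "arc \<gamma>" "path_image \<gamma> = A" "pathstart \<gamma> = x" "pathfinish \<gamma> = b"
      unfolding arc_endpoint_def arc_from_to_def by blast
    have ag: "arc (h \<circ> \<gamma>)" using arc_compose_inj[OF \<gamma>(1) _ ch injh] \<gamma>(2) AK KC by auto
    have "path_image (h \<circ> \<gamma>) = Sg"
    proof -
      have hkS: "\<And>y. y \<in> Sg \<Longrightarrow> h (k y) = y" using SgK K'M hk by blast
      have "h ` k ` Sg = Sg"
      proof
        show "h ` k ` Sg \<subseteq> Sg" using hkS by auto
        show "Sg \<subseteq> h ` k ` Sg"
        proof
          fix y assume y: "y \<in> Sg"
          then have "y = h (k y)" using hkS by auto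
          then show "y \<in> h ` k ` Sg" using y by blast
        qed
      qed
      then show ?thesis unfolding path_image_compose \<gamma>(2) A_def .
    qed
    show False
    proof (rule segment_start[of "snd e" "snd q" "h \<circ> \<gamma>" c])
      show "path (h \<circ> \<gamma>)" by (rule arc_imp_path[OF ag])
      show "inj_on (h \<circ> \<gamma>) {0..1}" by (rule arc_imp_inj_on[OF ag])
      show "path_image (h \<circ> \<gamma>) = pt c ` {0..snd q}" using \<open>path_image (h \<circ> \<gamma>) = Sg\<close> Sg_def by simp
      show "pathstart (h \<circ> \<gamma>) = pt c (snd e)" using \<gamma>(3) x(2) e'(2) by (simp add: pathstart_compose)
    qed (use e' lt in auto)
  qed
  show False
    using main_model[OF ret' tauK p segs dense EK maxE] by blast
qed

lemma lelek_compact: "lelek_fan X \<Longrightarrow> compact X \<and> X \<noteq> {}"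
  unfolding lelek_fan_def lelek_fan_with_top_def smooth_fan_with_top_def fan_with_top_def
    dendroid_def continuum_def by blast

theorem mainTheorem9:
  fixes L L' W C :: "'a::metric_space set" and v :: 'a
  assumes "lelek_fan_with_top L v"
    and "wedge L v W"
    and "L' \<subseteq> L" and "lelek_fan L'"
    and "lelek_fan (L' \<inter> W)"
    and "cantor_fan C" and "L' \<inter> W \<subseteq> C" and "C \<subseteq> W"
  shows "\<not> (\<exists>r. retraction L L' r)"
proof
  assume "\<exists>r. retraction L L' r"
  then obtain r where r: "retraction L L' r" by blast
  have rc: "continuous_on L r" and rL: "\<And>x. x \<in> L \<Longrightarrow> r x \<in> L'" and rfix: "\<And>x. x \<in> L' \<Longrightarrow> r x = x"
    using r unfolding retraction_def by auto
  define K where "K = L' \<inter> W"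
  define Ms where "Ms = (L - W) \<union> {v}"
  have WL: "W \<subseteq> L" and cW: "compact W" and cMs: "compact Ms"
    using assms(2) lelek_compact unfolding wedge_def continuum_def Ms_def by auto
  have cL': "compact L'" using lelek_compact[OF assms(4)] by auto
  have Kne: "K \<noteq> {}" using lelek_compact[OF assms(5)] unfolding K_def by auto
  define k0 where "k0 = (if v \<in> K then v else (SOME x. x \<in> K))"
  have k0K: "k0 \<in> K" unfolding k0_def using Kne by (auto intro: someI_ex)
  define q where "q x = (if x \<in> W then x else k0)" for x
  have qc: "continuous_on L' q"
  proof -
    have "continuous_on ((L' \<inter> W) \<union> (L' \<inter> Ms)) q"
    proof (rule continuous_on_closed_Un)
      show "closed (L' \<inter> W)" using cL' cW by (intro closed_Int compact_imp_closed)
      show "closed (L' \<inter> Ms)" using cL' cMs by (intro closed_Int compact_imp_closed)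
      show "continuous_on (L' \<inter> W) q"
        by (rule continuous_on_eq[OF continuous_on_id]) (auto simp: q_def)
      show "continuous_on (L' \<inter> Ms) q"
      proof (rule continuous_on_eq[OF continuous_on_const[of _ k0]])
        fix x assume x: "x \<in> L' \<inter> Ms"
        show "k0 = q x"
        proof (cases "x \<in> W")
          case True
          then have "x = v" using x unfolding Ms_def by auto
          then have "v \<in> K" using x True unfolding K_def by auto
          then show ?thesis using \<open>x = v\<close> True unfolding q_def k0_def by auto
        qed (auto simp: q_def)
      qed
    qed
    moreover have "(L' \<inter> W) \<union> (L' \<inter> Ms) = L'" using assms(3) unfolding Ms_def by auto
    ultimately show ?thesis by simp
  qed
  define \<rho> where "\<rho> x = q (r x)" for x
  have "retraction C K \<rho>"
    unfolding retraction_def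
  proof (intro conjI)
    show "K \<subseteq> C" using assms(7) unfolding K_def .
    show "continuous_on C \<rho>" unfolding \<rho>_def
      by (rule continuous_on_compose2[OF qc continuous_on_subset[OF rc]]) (use assms(8) WL rL in auto)
    show "\<rho> \<in> C \<rightarrow> K"
    proof
      fix x assume "x \<in> C"
      then have "r x \<in> L'" using assms(8) WL rL by auto
      then show "\<rho> x \<in> K" unfolding \<rho>_def q_def K_def using k0K unfolding K_def by auto
    qed
    show "\<forall>x\<in>K. \<rho> x = x" unfolding \<rho>_def q_def K_def using rfix by auto
  qed
  moreover obtain h k where "homeomorphism C cantor_fan_model h k"
    using assms(6) unfolding cantor_fan_def homeomorphic_def by blast
  ultimately show False
    using transfer_main[of K C h k \<rho>] assms(5,7) unfolding K_def by blast
qed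

end
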